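(* Let $S$ be a semigroup with finite $\mathcal{R}$-height, and let $A$ be a left ideal of $S$. Let $T$ be a right simple semigroup with no idempotent, disjoint from $S$, and let $U$ be the semigroup defined by the presentation with generating set $S\cup T$ and defining relations $ab=a\cdot b$, $cd=c\cdot d$ and $ac=c$ for all $a,b\in S$ and $c,d\in T$ (where $a\cdot b$ and $c\cdot d$ denote the products in $S$ and in $T$ respectively). Fix $c\in T$ and let $B=T^1(A\cup\{c\})$, a left ideal of $U$. Then $\mathrm{H}_{\mathcal{R}}(U)=\mathrm{H}_{\mathcal{R}}(S)+1$ and $\mathrm{H}_{\mathcal{R}}(B)=\mathrm{H}_{\mathcal{R}}(A)+2$.
   Context: A semigroup is right simple if it has no proper right ideals. A presentation $\langle X\mid R\rangle$ defines the quotient of the free semigroup on $X$ by the congruence generated by $R$. $T^1$ denotes $T$ with an identity adjoined. Green's preorder on a semigroup $M$: $u\leq_{\mathcal{R}} v$ iff $uM^1\subseteq vM^1$; $\mathcal{R}$ is the associated equivalence; the $\mathcal{R}$-height $\mathrm{H}_{\mathcal{R}}(M)$ is the supremum of cardinalities of chains in the poset of $\mathcal{R}$-classes. For $A$ and $B$ the $\mathcal{R}$-height is computed in $A$ and $B$ as semigroups in their own right. A left ideal is a non-empty subset $A$ with $SA\subseteq A$. *)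

theory Defs
  imports Main "HOL-Library.Extended_Nat"
begin

definition semigroup_on :: "'a set \<Rightarrow> ('a \<Rightarrow> 'a \<Rightarrow> 'a) \<Rightarrow> bool" where
  "semigroup_on M f \<longleftrightarrow>
     (\<forall>x\<in>M. \<forall>y\<in>M. f x y \<in> M) \<and>
     (\<forall>x\<in>M. \<forall>y\<in>M. \<forall>z\<in>M. f (f x y) z = f x (f y z))"

definition right_ideal :: "'a set \<Rightarrow> ('a \<Rightarrow> 'a \<Rightarrow> 'a) \<Rightarrow> 'a set \<Rightarrow> bool" where
  "right_ideal M f I \<longleftrightarrow> I \<noteq> {} \<and> I \<subseteq> M \<and> (\<forall>x\<in>I. \<forall>s\<in>M. f x s \<in> I)"

definition left_ideal :: "'a set \<Rightarrow> ('a \<Rightarrow> 'a \<Rightarrow> 'a) \<Rightarrow> 'a set \<Rightarrow> bool" where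
  "left_ideal M f I \<longleftrightarrow> I \<noteq> {} \<and> I \<subseteq> M \<and> (\<forall>s\<in>M. \<forall>x\<in>I. f s x \<in> I)"

definition right_simple :: "'a set \<Rightarrow> ('a \<Rightarrow> 'a \<Rightarrow> 'a) \<Rightarrow> bool" where
  "right_simple M f \<longleftrightarrow> (\<forall>I. right_ideal M f I \<longrightarrow> I = M)"

definition has_no_idempotent :: "'a set \<Rightarrow> ('a \<Rightarrow> 'a \<Rightarrow> 'a) \<Rightarrow> bool" where
  "has_no_idempotent M f \<longleftrightarrow> (\<forall>e\<in>M. f e e \<noteq> e)"

text \<open>u \<le>R v iff u M^1 \<subseteq> v M^1, i.e. u = v or u = v w for some w in M.\<close>
definition R_le :: "'a set \<Rightarrow> ('a \<Rightarrow> 'a \<Rightarrow> 'a) \<Rightarrow> 'a \<Rightarrow> 'a \<Rightarrow> bool" where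
  "R_le M f u v \<longleftrightarrow> u = v \<or> (\<exists>w\<in>M. u = f v w)"

definition R_class :: "'a set \<Rightarrow> ('a \<Rightarrow> 'a \<Rightarrow> 'a) \<Rightarrow> 'a \<Rightarrow> 'a set" where
  "R_class M f u = {v\<in>M. R_le M f u v \<and> R_le M f v u}"

definition R_classes :: "'a set \<Rightarrow> ('a \<Rightarrow> 'a \<Rightarrow> 'a) \<Rightarrow> 'a set set" where
  "R_classes M f = R_class M f ` M"

definition R_class_le :: "'a set \<Rightarrow> ('a \<Rightarrow> 'a \<Rightarrow> 'a) \<Rightarrow> 'a set \<Rightarrow> 'a set \<Rightarrow> bool" where
  "R_class_le M f X Y \<longleftrightarrow> (\<exists>x\<in>X. \<exists>y\<in>Y. R_le M f x y)"

definition R_chain :: "'a set \<Rightarrow> ('a \<Rightarrow> 'a \<Rightarrow> 'a) \<Rightarrow> 'a set set \<Rightarrow> bool" where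
  "R_chain M f C \<longleftrightarrow> C \<subseteq> R_classes M f \<and>
     (\<forall>X\<in>C. \<forall>Y\<in>C. R_class_le M f X Y \<or> R_class_le M f Y X)"

text \<open>R-height: supremum of the cardinalities of chains of R-classes (as an extended
  natural; infinite chains contain arbitrarily large finite subchains, so it suffices
  to take the supremum over finite chains).\<close>
definition R_height :: "'a set \<Rightarrow> ('a \<Rightarrow> 'a \<Rightarrow> 'a) \<Rightarrow> enat" where
  "R_height M f = Sup {enat (card C) | C. finite C \<and> R_chain M f C}"

text \<open>Generators: S \<union> T realised disjointly as Inl ` S \<union> Inr ` T.
  Elements of the free semigroup: nonempty words over the generators.\<close>

definition gen_words :: "'a set \<Rightarrow> 'b set \<Rightarrow> ('a + 'b) list set" where
  "gen_words S T = {w. w \<noteq> [] \<and> set w \<subseteq> S <+> T}"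

inductive U_rel :: "'a set \<Rightarrow> ('a \<Rightarrow> 'a \<Rightarrow> 'a) \<Rightarrow> 'b set \<Rightarrow> ('b \<Rightarrow> 'b \<Rightarrow> 'b)
    \<Rightarrow> ('a + 'b) list \<Rightarrow> ('a + 'b) list \<Rightarrow> bool"
  for S mS T mT where
  relS: "a \<in> S \<Longrightarrow> b \<in> S \<Longrightarrow> U_rel S mS T mT [Inl a, Inl b] [Inl (mS a b)]"
| relT: "c \<in> T \<Longrightarrow> d \<in> T \<Longrightarrow> U_rel S mS T mT [Inr c, Inr d] [Inr (mT c d)]"
| relST: "a \<in> S \<Longrightarrow> c \<in> T \<Longrightarrow> U_rel S mS T mT [Inl a, Inr c] [Inr c]"

inductive U_cong :: "'a set \<Rightarrow> ('a \<Rightarrow> 'a \<Rightarrow> 'a) \<Rightarrow> 'b set \<Rightarrow> ('b \<Rightarrow> 'b \<Rightarrow> 'b)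
    \<Rightarrow> ('a + 'b) list \<Rightarrow> ('a + 'b) list \<Rightarrow> bool"
  for S mS T mT where
  cong_refl: "w \<in> gen_words S T \<Longrightarrow> U_cong S mS T mT w w"
| cong_step: "p @ l @ q \<in> gen_words S T \<Longrightarrow> U_rel S mS T mT l r \<Longrightarrow>
     U_cong S mS T mT (p @ l @ q) (p @ r @ q)"
| cong_sym: "U_cong S mS T mT u v \<Longrightarrow> U_cong S mS T mT v u"
| cong_trans: "U_cong S mS T mT u v \<Longrightarrow> U_cong S mS T mT v w \<Longrightarrow> U_cong S mS T mT u w"

definition U_class :: "'a set \<Rightarrow> ('a \<Rightarrow> 'a \<Rightarrow> 'a) \<Rightarrow> 'b set \<Rightarrow> ('b \<Rightarrow> 'b \<Rightarrow> 'b)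
    \<Rightarrow> ('a + 'b) list \<Rightarrow> ('a + 'b) list set" where
  "U_class S mS T mT w = {v. U_cong S mS T mT w v}"

definition U_carrier :: "'a set \<Rightarrow> ('a \<Rightarrow> 'a \<Rightarrow> 'a) \<Rightarrow> 'b set \<Rightarrow> ('b \<Rightarrow> 'b \<Rightarrow> 'b)
    \<Rightarrow> ('a + 'b) list set set" where
  "U_carrier S mS T mT = U_class S mS T mT ` gen_words S T"

definition U_mult :: "'a set \<Rightarrow> ('a \<Rightarrow> 'a \<Rightarrow> 'a) \<Rightarrow> 'b set \<Rightarrow> ('b \<Rightarrow> 'b \<Rightarrow> 'b)
    \<Rightarrow> ('a + 'b) list set \<Rightarrow> ('a + 'b) list set \<Rightarrow> ('a + 'b) list set" where
  "U_mult S mS T mT X Y = U_class S mS T mT ((SOME x. x \<in> X) @ (SOME y. y \<in> Y))"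

text \<open>B = T^1 (A \<union> {c}) inside U: the elements x and t x with t in T, x in A \<union> {c}
  (A and c being identified with the images of the corresponding generators).\<close>
definition B_set :: "'a set \<Rightarrow> ('a \<Rightarrow> 'a \<Rightarrow> 'a) \<Rightarrow> 'b set \<Rightarrow> ('b \<Rightarrow> 'b \<Rightarrow> 'b)
    \<Rightarrow> 'a set \<Rightarrow> 'b \<Rightarrow> ('a + 'b) list set set" where
  "B_set S mS T mT A c =
     {U_class S mS T mT [x] | x. x \<in> Inl ` A \<union> {Inr c}} \<union>
     {U_class S mS T mT [Inr t, x] | t x. t \<in> T \<and> x \<in> Inl ` A \<union> {Inr c}}"

end

theory Submission
  imports Defs
begin


definition pchain :: "'a set \<Rightarrow> ('a \<Rightarrow> 'a \<Rightarrow> bool) \<Rightarrow> 'a set \<Rightarrow> bool" where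
  "pchain M le E \<longleftrightarrow> E \<subseteq> M \<and> (\<forall>x\<in>E. \<forall>y\<in>E. le x y \<or> le y x) \<and>
     (\<forall>x\<in>E. \<forall>y\<in>E. le x y \<and> le y x \<longrightarrow> x = y)"

definition pheight :: "'a set \<Rightarrow> ('a \<Rightarrow> 'a \<Rightarrow> bool) \<Rightarrow> enat" where
  "pheight M le = Sup {enat (card E) | E. finite E \<and> pchain M le E}"

lemma R_le_refl: "R_le M f u u"
  by (simp add: R_le_def)

lemma R_le_trans:
  assumes sg: "semigroup_on M f" and z: "z \<in> M" and uv: "R_le M f u v" and vz: "R_le M f v z"
  shows "R_le M f u z"
proof -
  have cl: "\<And>x y. x \<in> M \<Longrightarrow> y \<in> M \<Longrightarrow> f x y \<in> M" and as: "\<And>x y w. x \<in> M \<Longrightarrow> y \<in> M \<Longrightarrow> w \<in> M \<Longrightarrow> f (f x y) w = f x (f y w)"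
    using sg by (auto simp: semigroup_on_def)
  show ?thesis
  proof (cases "u = v")
    case True then show ?thesis using vz by simp
  next
    case False
    then obtain w where w: "w \<in> M" "u = f v w" using uv by (auto simp: R_le_def)
    show ?thesis
    proof (cases "v = z")
      case True then show ?thesis using uv by simp
    next
      case False
      then obtain w' where w': "w' \<in> M" "v = f z w'" using vz by (auto simp: R_le_def)
      have "u = f z (f w' w)" using w w' as z by simp
      moreover have "f w' w \<in> M" using cl w w' by simp
      ultimately show ?thesis by (auto simp: R_le_def)
    qed
  qed
qed

lemma Rh_pheight:
  assumes sg: "semigroup_on M f"
  shows "R_height M f = pheight M (R_le M f)"
proof -
  let ?le = "R_le M f"
  let ?c = "R_class M f"
  have tr: "\<And>u v z. z \<in> M \<Longrightarrow> ?le u v \<Longrightarrow> ?le v z \<Longrightarrow> ?le u z"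
    using R_le_trans[OF sg] by blast
  have mem: "\<And>u. u \<in> M \<Longrightarrow> u \<in> ?c u" by (simp add: R_class_def R_le_refl)
  have ceq: "\<And>u v. u\<in>M \<Longrightarrow> v\<in>M \<Longrightarrow> ?c u = ?c v \<longleftrightarrow> ?le u v \<and> ?le v u"
  proof
    fix u v assume u: "u \<in> M" and v: "v \<in> M" and e: "?c u = ?c v"
    have "v \<in> ?c u" using e mem[OF v] by simp
    then show "?le u v \<and> ?le v u" by (simp add: R_class_def)
  next
    fix u v assume u: "u \<in> M" and v: "v \<in> M" and e: "?le u v \<and> ?le v u"
    show "?c u = ?c v"
      unfolding R_class_def using e tr u v by blast
  qed
  have cle: "\<And>u v. u\<in>M \<Longrightarrow> v\<in>M \<Longrightarrow> R_class_le M f (?c u) (?c v) \<longleftrightarrow> ?le u v"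
  proof
    fix u v assume u: "u \<in> M" and v: "v \<in> M" and h: "R_class_le M f (?c u) (?c v)"
    then obtain x y where x: "x \<in> ?c u" and y: "y \<in> ?c v" and xy: "?le x y"
      by (auto simp: R_class_le_def)
    have "?le u x" "?le y v" "x \<in> M" using x y by (auto simp: R_class_def)
    then show "?le u v" using xy tr v by blast
  next
    fix u v assume u: "u \<in> M" and v: "v \<in> M" and h: "?le u v"
    then show "R_class_le M f (?c u) (?c v)"
      unfolding R_class_le_def using mem by blast
  qed
  have "{enat (card C) | C. finite C \<and> R_chain M f C} = {enat (card E) | E. finite E \<and> pchain M ?le E}"
  proof (intro equalityI subsetI)
    fix k assume "k \<in> {enat (card C) | C. finite C \<and> R_chain M f C}"
    then obtain C where k: "k = enat (card C)" and fC: "finite C" and ch: "R_chain M f C" by blast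
    define r where "r X = (SOME u. u \<in> M \<and> X = ?c u)" for X
    have r: "r X \<in> M \<and> X = ?c (r X)" if "X \<in> C" for X
    proof -
      have "\<exists>u. u \<in> M \<and> X = ?c u" using ch that by (auto simp: R_chain_def R_classes_def)
      then show ?thesis unfolding r_def by (rule someI_ex)
    qed
    have inj: "inj_on r C"
      by (rule inj_onI) (metis r)
    have "pchain M ?le (r ` C)"
      unfolding pchain_def
    proof (intro conjI ballI impI)
      show "r ` C \<subseteq> M" using r by auto
    next
      fix x y assume "x \<in> r ` C" "y \<in> r ` C"
      then obtain X Y where X: "X \<in> C" "x = r X" and Y: "Y \<in> C" "y = r Y" by blast
      have "R_class_le M f X Y \<or> R_class_le M f Y X" using ch X Y by (auto simp: R_chain_def)
      then show "?le x y \<or> ?le y x" using cle r X Y by metis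
    next
      fix x y assume "x \<in> r ` C" "y \<in> r ` C" and h: "?le x y \<and> ?le y x"
      then obtain X Y where X: "X \<in> C" "x = r X" and Y: "Y \<in> C" "y = r Y" by blast
      have "?c x = ?c y" using ceq h r X Y by metis
      then show "x = y" using r X Y by metis
    qed
    moreover have "card (r ` C) = card C" using inj by (rule card_image)
    ultimately show "k \<in> {enat (card E) | E. finite E \<and> pchain M ?le E}"
      using k fC by (metis (mono_tags, lifting) finite_imageI mem_Collect_eq)
  next
    fix k assume "k \<in> {enat (card E) | E. finite E \<and> pchain M ?le E}"
    then obtain E where k: "k = enat (card E)" and fE: "finite E" and ch: "pchain M ?le E" by blast
    have EM: "E \<subseteq> M" using ch by (simp add: pchain_def)
    have inj: "inj_on ?c E"
    proof (rule inj_onI)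
      fix x y assume "x \<in> E" "y \<in> E" "?c x = ?c y"
      then show "x = y" using ceq EM ch unfolding pchain_def by blast
    qed
    have "R_chain M f (?c ` E)"
      unfolding R_chain_def R_classes_def using EM ch cle unfolding pchain_def by blast
    moreover have "card (?c ` E) = card E" using inj by (rule card_image)
    ultimately show "k \<in> {enat (card C) | C. finite C \<and> R_chain M f C}"
      using k fE by (metis (mono_tags, lifting) finite_imageI mem_Collect_eq)
  qed
  then show ?thesis by (simp add: R_height_def pheight_def)
qed


lemma pchain_mono: "pchain M le E \<Longrightarrow> E' \<subseteq> E \<Longrightarrow> pchain M le E'"
  unfolding pchain_def by blast

lemma pheight_split:
  assumes NM: "N \<subseteq> M"
    and below: "\<And>p n. p \<in> M - N \<Longrightarrow> n \<in> N \<Longrightarrow> le p n \<and> \<not> le n p"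
    and Z: "finite Z" "pchain (M - N) le Z" "card Z = k"
    and bnd: "\<And>E. finite E \<Longrightarrow> pchain (M - N) le E \<Longrightarrow> card E \<le> k"
  shows "pheight M le = pheight N le + enat k"
proof (rule antisym)
  show "pheight M le \<le> pheight N le + enat k"
    unfolding pheight_def[of M]
  proof (rule Sup_least)
    fix x assume "x \<in> {enat (card E) | E. finite E \<and> pchain M le E}"
    then obtain E where x: "x = enat (card E)" and fE: "finite E" and ch: "pchain M le E" by blast
    have E1: "pchain N le (E \<inter> N)" and E2: "pchain (M - N) le (E - N)"
      using ch unfolding pchain_def by blast+
    have "card E = card (E \<inter> N) + card (E - N)"
      using fE by (rule card_Int_Diff)
    moreover have "enat (card (E \<inter> N)) \<le> pheight N le"
      unfolding pheight_def using E1 fE by (intro Sup_upper) blast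
    moreover have "card (E - N) \<le> k" using bnd E2 fE by blast
    ultimately show "x \<le> pheight N le + enat k"
      using x by (metis add_mono enat_ord_simps(1) plus_enat_simps(1))
  qed
next
  show "pheight N le + enat k \<le> pheight M le"
  proof (cases "pheight M le")
    case infinity then show ?thesis by simp
  next
    case (enat m)
    have key: "card EN + k \<le> m" if fEN: "finite EN" and ch: "pchain N le EN" for EN
    proof -
      have ENN: "EN \<subseteq> N" using ch by (simp add: pchain_def)
      have ZM: "Z \<subseteq> M - N" using Z by (simp add: pchain_def)
      have c1: "\<And>x y. x\<in>EN \<Longrightarrow> y\<in>EN \<Longrightarrow> le x y \<or> le y x"
        and a1: "\<And>x y. x\<in>EN \<Longrightarrow> y\<in>EN \<Longrightarrow> le x y \<Longrightarrow> le y x \<Longrightarrow> x = y"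
        using ch by (auto simp: pchain_def)
      have c0: "\<And>x y. x\<in>Z \<Longrightarrow> y\<in>Z \<Longrightarrow> le x y \<or> le y x"
        and a0: "\<And>x y. x\<in>Z \<Longrightarrow> y\<in>Z \<Longrightarrow> le x y \<Longrightarrow> le y x \<Longrightarrow> x = y"
        using Z(2) by (auto simp: pchain_def)
      have bl: "\<And>p n. p\<in>Z \<Longrightarrow> n\<in>EN \<Longrightarrow> le p n \<and> \<not> le n p"
        using below ENN ZM by blast
      have "pchain M le (EN \<union> Z)"
        unfolding pchain_def
      proof (intro conjI ballI impI)
        show "EN \<union> Z \<subseteq> M" using ENN ZM NM by blast
      next
        fix x y assume x: "x \<in> EN \<union> Z" and y: "y \<in> EN \<union> Z"
        show "le x y \<or> le y x"
          using x y c1 c0 bl by blast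
      next
        fix x y assume x: "x \<in> EN \<union> Z" and y: "y \<in> EN \<union> Z" and h: "le x y \<and> le y x"
        show "x = y"
          using x y h a1 a0 bl by blast
      qed
      then have "enat (card (EN \<union> Z)) \<le> pheight M le"
        unfolding pheight_def using fEN Z(1) by (intro Sup_upper) blast
      moreover have "card (EN \<union> Z) = card EN + k"
        using card_Un_disjoint[OF fEN Z(1)] ENN ZM Z(3) by blast
      ultimately show ?thesis using enat by simp
    qed
    have km: "k \<le> m" using key[of "{}"] by (simp add: pchain_def)
    have "pheight N le \<le> enat (m - k)"
      unfolding pheight_def
    proof (rule Sup_least)
      fix x assume "x \<in> {enat (card E) | E. finite E \<and> pchain N le E}"
      then obtain E where "x = enat (card E)" "finite E" "pchain N le E" by blast
      then show "x \<le> enat (m - k)" using key by fastforce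
    qed
    then have "pheight N le + enat k \<le> enat (m - k) + enat k" by (rule add_right_mono)
    also have "\<dots> = enat m" using km by simp
    finally show ?thesis using enat by simp
  qed
qed

lemma pheight_iso:
  assumes inj: "inj_on \<phi> M" and le: "\<And>x y. x \<in> M \<Longrightarrow> y \<in> M \<Longrightarrow> le' (\<phi> x) (\<phi> y) \<longleftrightarrow> le x y"
  shows "pheight (\<phi> ` M) le' = pheight M le"
proof -
  have "{enat (card E) | E. finite E \<and> pchain (\<phi> ` M) le' E} = {enat (card E) | E. finite E \<and> pchain M le E}"
  proof (intro equalityI subsetI)
    fix x assume "x \<in> {enat (card E) | E. finite E \<and> pchain (\<phi> ` M) le' E}"
    then obtain E' where x: "x = enat (card E')" and f: "finite E'" and ch: "pchain (\<phi> ` M) le' E'" by blast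
    obtain E where E: "E \<subseteq> M" "E' = \<phi> ` E" using ch unfolding pchain_def by (meson subset_imageE)
    have injE: "inj_on \<phi> E" using inj E(1) inj_on_subset by blast
    have "finite E" using f E injE finite_image_iff by blast
    moreover have "card E' = card E" using E injE card_image by blast
    moreover have "pchain M le E"
      unfolding pchain_def
    proof (intro conjI ballI impI)
      show "E \<subseteq> M" using E by simp
    next
      fix x y assume xy: "x \<in> E" "y \<in> E"
      then have "le' (\<phi> x) (\<phi> y) \<or> le' (\<phi> y) (\<phi> x)" using ch E unfolding pchain_def by blast
      then show "le x y \<or> le y x" using le xy E by blast
    next
      fix x y assume xy: "x \<in> E" "y \<in> E" and h: "le x y \<and> le y x"
      then have "le' (\<phi> x) (\<phi> y) \<and> le' (\<phi> y) (\<phi> x)" using le E by blast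
      then have "\<phi> x = \<phi> y" using ch E xy unfolding pchain_def by blast
      then show "x = y" using injE xy unfolding inj_on_def by blast
    qed
    ultimately show "x \<in> {enat (card E) | E. finite E \<and> pchain M le E}" using x by blast
  next
    fix x assume "x \<in> {enat (card E) | E. finite E \<and> pchain M le E}"
    then obtain E where x: "x = enat (card E)" and f: "finite E" and ch: "pchain M le E" by blast
    have EM: "E \<subseteq> M" using ch by (simp add: pchain_def)
    have injE: "inj_on \<phi> E" using inj EM inj_on_subset by blast
    have "card (\<phi> ` E) = card E" using injE card_image by blast
    moreover have "pchain (\<phi> ` M) le' (\<phi> ` E)"
      unfolding pchain_def
    proof (intro conjI ballI impI)
      show "\<phi> ` E \<subseteq> \<phi> ` M" using EM by blast
    next
      fix x y assume "x \<in> \<phi> ` E" "y \<in> \<phi> ` E"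
      then obtain a b where ab: "a \<in> E" "b \<in> E" "x = \<phi> a" "y = \<phi> b" by blast
      then show "le' x y \<or> le' y x" using ch le EM unfolding pchain_def by blast
    next
      fix x y assume "x \<in> \<phi> ` E" "y \<in> \<phi> ` E" and h: "le' x y \<and> le' y x"
      then obtain a b where ab: "a \<in> E" "b \<in> E" "x = \<phi> a" "y = \<phi> b" by blast
      then have "le a b \<and> le b a" using h le EM by blast
      then show "x = y" using ch ab unfolding pchain_def by blast
    qed
    ultimately show "x \<in> {enat (card E) | E. finite E \<and> pchain (\<phi> ` M) le' E}"
      using x f by (metis (mono_tags, lifting) finite_imageI mem_Collect_eq)
  qed
  then show ?thesis by (simp add: pheight_def)
qed

lemma R_height_iso:
  assumes sg: "semigroup_on M f" and inj: "inj_on \<psi> M"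
    and hom: "\<And>x y. x \<in> M \<Longrightarrow> y \<in> M \<Longrightarrow> g (\<psi> x) (\<psi> y) = \<psi> (f x y)"
  shows "semigroup_on (\<psi> ` M) g" "R_height (\<psi> ` M) g = R_height M f"
proof -
  have cl: "\<And>x y. x \<in> M \<Longrightarrow> y \<in> M \<Longrightarrow> f x y \<in> M" and as: "\<And>x y w. x \<in> M \<Longrightarrow> y \<in> M \<Longrightarrow> w \<in> M \<Longrightarrow> f (f x y) w = f x (f y w)"
    using sg by (auto simp: semigroup_on_def)
  show sg': "semigroup_on (\<psi> ` M) g"
    unfolding semigroup_on_def using cl as hom by auto
  have le: "R_le (\<psi> ` M) g (\<psi> x) (\<psi> y) \<longleftrightarrow> R_le M f x y" if "x \<in> M" "y \<in> M" for x y
  proof -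
    have "R_le (\<psi> ` M) g (\<psi> x) (\<psi> y) \<longleftrightarrow> \<psi> x = \<psi> y \<or> (\<exists>w\<in>M. \<psi> x = \<psi> (f y w))"
      unfolding R_le_def using hom that by auto
    also have "\<dots> \<longleftrightarrow> x = y \<or> (\<exists>w\<in>M. x = f y w)"
      using inj that cl unfolding inj_on_def by metis
    finally show ?thesis by (simp add: R_le_def)
  qed
  show "R_height (\<psi> ` M) g = R_height M f"
    using Rh_pheight[OF sg'] Rh_pheight[OF sg] pheight_iso[OF inj, of "R_le (\<psi> ` M) g" "R_le M f", OF le] by simp
qed

lemma R_height_sub:
  assumes sg: "semigroup_on N f" and le: "\<And>x y. x \<in> N \<Longrightarrow> y \<in> N \<Longrightarrow> le x y \<longleftrightarrow> R_le N f x y"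
  shows "pheight N le = R_height N f"
  using pheight_iso[of id N "R_le N f" le] le Rh_pheight[OF sg] by simp



datatype ('a, 'b) nf = NS 'a | NT 'b | NTS 'b 'a

fun nm :: "('a \<Rightarrow> 'a \<Rightarrow> 'a) \<Rightarrow> ('b \<Rightarrow> 'b \<Rightarrow> 'b) \<Rightarrow> ('a, 'b) nf \<Rightarrow> ('a, 'b) nf \<Rightarrow> ('a, 'b) nf" where
  "nm mS mT (NS a) (NS b) = NS (mS a b)"
| "nm mS mT (NS a) (NT u) = NT u"
| "nm mS mT (NS a) (NTS u b) = NTS u b"
| "nm mS mT (NT t) (NS a) = NTS t a"
| "nm mS mT (NT t) (NT u) = NT (mT t u)"
| "nm mS mT (NT t) (NTS u a) = NTS (mT t u) a"
| "nm mS mT (NTS t a) (NS b) = NTS t (mS a b)"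
| "nm mS mT (NTS t a) (NT u) = NT (mT t u)"
| "nm mS mT (NTS t a) (NTS u b) = NTS (mT t u) b"

fun vld :: "'a set \<Rightarrow> 'b set \<Rightarrow> ('a, 'b) nf \<Rightarrow> bool" where
  "vld S T (NS a) = (a \<in> S)"
| "vld S T (NT t) = (t \<in> T)"
| "vld S T (NTS t a) = (t \<in> T \<and> a \<in> S)"

fun lt :: "'a + 'b \<Rightarrow> ('a, 'b) nf" where
  "lt (Inl a) = NS a"
| "lt (Inr t) = NT t"

fun ev :: "('a \<Rightarrow> 'a \<Rightarrow> 'a) \<Rightarrow> ('b \<Rightarrow> 'b \<Rightarrow> 'b) \<Rightarrow> ('a + 'b) list \<Rightarrow> ('a, 'b) nf option" where
  "ev mS mT [] = None"
| "ev mS mT (x # xs) = Some (case ev mS mT xs of None \<Rightarrow> lt x | Some y \<Rightarrow> nm mS mT (lt x) y)"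

fun om :: "('a \<Rightarrow> 'a \<Rightarrow> 'a) \<Rightarrow> ('b \<Rightarrow> 'b \<Rightarrow> 'b) \<Rightarrow> ('a, 'b) nf option \<Rightarrow> ('a, 'b) nf option \<Rightarrow> ('a, 'b) nf option" where
  "om mS mT None y = y"
| "om mS mT (Some x) None = Some x"
| "om mS mT (Some x) (Some y) = Some (nm mS mT x y)"

fun canon :: "('a, 'b) nf \<Rightarrow> ('a + 'b) list" where
  "canon (NS a) = [Inl a]"
| "canon (NT t) = [Inr t]"
| "canon (NTS t a) = [Inr t, Inl a]"

locale setting =
  fixes S :: "'a set" and mS :: "'a \<Rightarrow> 'a \<Rightarrow> 'a"
    and T :: "'b set" and mT :: "'b \<Rightarrow> 'b \<Rightarrow> 'b"
  assumes sgS: "semigroup_on S mS" and sgT: "semigroup_on T mT"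
begin

abbreviation "V \<equiv> {x. vld S T x}"
abbreviation "mult \<equiv> nm mS mT"

lemma clS: "a \<in> S \<Longrightarrow> b \<in> S \<Longrightarrow> mS a b \<in> S" using sgS by (simp add: semigroup_on_def)
lemma clT: "a \<in> T \<Longrightarrow> b \<in> T \<Longrightarrow> mT a b \<in> T" using sgT by (simp add: semigroup_on_def)
lemma asS: "a \<in> S \<Longrightarrow> b \<in> S \<Longrightarrow> c \<in> S \<Longrightarrow> mS (mS a b) c = mS a (mS b c)" using sgS by (simp add: semigroup_on_def)
lemma asT: "a \<in> T \<Longrightarrow> b \<in> T \<Longrightarrow> c \<in> T \<Longrightarrow> mT (mT a b) c = mT a (mT b c)" using sgT by (simp add: semigroup_on_def)

lemma vld_mult: "vld S T x \<Longrightarrow> vld S T y \<Longrightarrow> vld S T (mult x y)"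
  by (cases x; cases y) (auto simp: clS clT)

lemma assoc: "vld S T x \<Longrightarrow> vld S T y \<Longrightarrow> vld S T z \<Longrightarrow> mult (mult x y) z = mult x (mult y z)"
  by (cases x; cases y; cases z) (auto simp: asS asT)

lemma sgV: "semigroup_on V mult"
  unfolding semigroup_on_def using vld_mult assoc by auto

lemma vld_lt: "x \<in> S <+> T \<Longrightarrow> vld S T (lt x)"
  by auto

lemma ev_vld: "set w \<subseteq> S <+> T \<Longrightarrow> (case ev mS mT w of None \<Rightarrow> True | Some x \<Rightarrow> vld S T x)"
  by (induction w) (auto split: option.splits simp: vld_mult)

lemma ev_vld': "set w \<subseteq> S <+> T \<Longrightarrow> ev mS mT w = Some x \<Longrightarrow> vld S T x"
  using ev_vld[of w] by simp

lemma ev_ne: "w \<noteq> [] \<Longrightarrow> ev mS mT w \<noteq> None"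
  by (cases w) auto

lemma ev_append: "set u \<subseteq> S <+> T \<Longrightarrow> set v \<subseteq> S <+> T \<Longrightarrow> ev mS mT (u @ v) = om mS mT (ev mS mT u) (ev mS mT v)"
proof (induction u)
  case Nil then show ?case by simp
next
  case (Cons x u)
  have lx: "vld S T (lt x)" using Cons.prems by auto
  show ?case
  proof (cases "ev mS mT u")
    case None
    then have "u = []" using ev_ne by blast
    then show ?thesis by (cases "ev mS mT v") auto
  next
    case (Some y)
    have vy: "vld S T y" using ev_vld'[of u y] Some Cons.prems by auto
    show ?thesis
    proof (cases "ev mS mT v")
      case None then show ?thesis using Cons Some by simp
    next
      case (Some z)
      have vz: "vld S T z" using ev_vld'[of v z] Some Cons.prems by auto
      show ?thesis using Cons Some \<open>ev mS mT u = Some y\<close> assoc[OF lx vy vz] by simp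
    qed
  qed
qed


lemma gw: "w \<in> gen_words S T \<longleftrightarrow> w \<noteq> [] \<and> set w \<subseteq> S <+> T"
  by (simp add: gen_words_def)

lemma rel_inv:
  assumes "U_rel S mS T mT l r"
  shows "set l \<subseteq> S <+> T \<and> set r \<subseteq> S <+> T \<and> r \<noteq> [] \<and> ev mS mT l = ev mS mT r"
  using assms by cases (auto simp: clS clT)

lemma cong_inv:
  assumes "U_cong S mS T mT u v"
  shows "u \<in> gen_words S T \<and> v \<in> gen_words S T \<and> ev mS mT u = ev mS mT v"
  using assms
proof (induction rule: U_cong.induct)
  case (cong_refl w) then show ?case by simp
next
  case (cong_step p l q r)
  have r: "set l \<subseteq> S <+> T" "set r \<subseteq> S <+> T" "r \<noteq> []" "ev mS mT l = ev mS mT r"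
    using rel_inv[OF cong_step(2)] by auto
  have pq: "set p \<subseteq> S <+> T" "set q \<subseteq> S <+> T" using cong_step(1) by (auto simp: gw)
  have "p @ r @ q \<in> gen_words S T" using r pq by (auto simp: gw)
  moreover have "ev mS mT (p @ l @ q) = ev mS mT (p @ r @ q)"
    using r pq by (simp add: ev_append)
  ultimately show ?case using cong_step(1) by simp
next
  case (cong_sym u v) then show ?case by simp
next
  case (cong_trans u v w) then show ?case by simp
qed

lemma cong_ctx:
  assumes "U_cong S mS T mT u v" "set p \<subseteq> S <+> T" "set q \<subseteq> S <+> T"
  shows "U_cong S mS T mT (p @ u @ q) (p @ v @ q)"
  using assms
proof (induction arbitrary: p q rule: U_cong.induct)
  case (cong_refl w) then show ?case by (intro U_cong.cong_refl) (auto simp: gw)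
next
  case (cong_step p' l q' r)
  have "U_cong S mS T mT ((p @ p') @ l @ (q' @ q)) ((p @ p') @ r @ (q' @ q))"
    using cong_step by (intro U_cong.cong_step) (auto simp: gw)
  then show ?case by simp
next
  case (cong_sym u v) then show ?case by (blast intro: U_cong.cong_sym)
next
  case (cong_trans u v w) then show ?case by (blast intro: U_cong.cong_trans)
qed

lemma step': "U_rel S mS T mT l r \<Longrightarrow> p @ l @ q \<in> gen_words S T \<Longrightarrow> w1 = p @ l @ q \<Longrightarrow> w2 = p @ r @ q
   \<Longrightarrow> U_cong S mS T mT w1 w2"
  using U_cong.cong_step by blast

lemma canon_gw: "vld S T n \<Longrightarrow> canon n \<in> gen_words S T"
  by (cases n) (auto simp: gw)

lemma ev_canon: "ev mS mT (canon n) = Some n"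
  by (cases n) auto

lemma cons_canon:
  assumes "x \<in> S <+> T" "vld S T n"
  shows "U_cong S mS T mT (x # canon n) (canon (mult (lt x) n))"
proof (cases x)
  case (Inl a)
  show ?thesis
  proof (cases n)
    case (NS b) then show ?thesis using Inl assms
      by (intro step'[where p="[]" and q="[]", OF U_rel.relS]) (auto simp: gw)
  next
    case (NT t) then show ?thesis using Inl assms
      by (intro step'[where p="[]" and q="[]", OF U_rel.relST]) (auto simp: gw)
  next
    case (NTS t b) then show ?thesis using Inl assms
      by (intro step'[where p="[]" and q="[Inl b]", OF U_rel.relST]) (auto simp: gw)
  qed
next
  case (Inr t)
  show ?thesis
  proof (cases n)
    case (NS b) then show ?thesis using Inr assms
      by (auto intro!: U_cong.cong_refl simp: gw)
  next
    case (NT u) then show ?thesis using Inr assms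
      by (intro step'[where p="[]" and q="[]", OF U_rel.relT]) (auto simp: gw)
  next
    case (NTS u b) then show ?thesis using Inr assms
      by (intro step'[where p="[]" and q="[Inl b]", OF U_rel.relT]) (auto simp: gw)
  qed
qed

lemma to_canon: "w \<in> gen_words S T \<Longrightarrow> U_cong S mS T mT w (canon (the (ev mS mT w)))"
proof (induction w)
  case Nil then show ?case by (simp add: gw)
next
  case (Cons x xs)
  show ?case
  proof (cases "xs = []")
    case True then show ?thesis using Cons.prems by (cases x) (auto intro!: U_cong.cong_refl simp: gw)
  next
    case False
    then obtain n where n: "ev mS mT xs = Some n" using ev_ne by blast
    have xs: "xs \<in> gen_words S T" "x \<in> S <+> T" using Cons.prems False by (auto simp: gw)
    have vn: "vld S T n" using ev_vld'[of xs n] n xs by (auto simp: gw)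
    have "U_cong S mS T mT ([x] @ xs @ []) ([x] @ canon n @ [])"
      using cong_ctx[OF Cons.IH[OF xs(1)], of "[x]" "[]"] n xs by simp
    then have "U_cong S mS T mT (x # xs) (x # canon n)" by simp
    moreover have "U_cong S mS T mT (x # canon n) (canon (mult (lt x) n))"
      using cons_canon xs vn by blast
    ultimately show ?thesis using n by (auto intro: U_cong.cong_trans)
  qed
qed

lemma cong_iff: "u \<in> gen_words S T \<Longrightarrow>
   U_cong S mS T mT u v \<longleftrightarrow> v \<in> gen_words S T \<and> ev mS mT v = ev mS mT u"
proof
  assume "U_cong S mS T mT u v" then show "v \<in> gen_words S T \<and> ev mS mT v = ev mS mT u"
    using cong_inv by metis
next
  assume u: "u \<in> gen_words S T" and v: "v \<in> gen_words S T \<and> ev mS mT v = ev mS mT u"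
  have "U_cong S mS T mT u (canon (the (ev mS mT u)))" using to_canon u by blast
  moreover have "U_cong S mS T mT v (canon (the (ev mS mT u)))" using to_canon v by metis
  ultimately show "U_cong S mS T mT u v" by (blast intro: U_cong.cong_sym U_cong.cong_trans)
qed

definition psi :: "('a, 'b) nf \<Rightarrow> ('a + 'b) list set" where
  "psi n = {v \<in> gen_words S T. ev mS mT v = Some n}"

lemma class_eq: "u \<in> gen_words S T \<Longrightarrow> U_class S mS T mT u = psi (the (ev mS mT u))"
  unfolding U_class_def psi_def using cong_iff ev_ne by (auto simp: gw)

lemma class_canon: "vld S T n \<Longrightarrow> U_class S mS T mT (canon n) = psi n"
  using class_eq[OF canon_gw] ev_canon by simp

lemma psi_inj: "inj_on psi V"
proof (rule inj_onI)
  fix x y assume x: "x \<in> V" and y: "y \<in> V" and e: "psi x = psi y"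
  have "canon x \<in> psi x" using x canon_gw ev_canon by (simp add: psi_def)
  then have "canon x \<in> psi y" using e by simp
  then show "x = y" by (simp add: psi_def ev_canon)
qed

lemma carrier_eq: "U_carrier S mS T mT = psi ` V"
proof (intro equalityI subsetI)
  fix X assume "X \<in> U_carrier S mS T mT"
  then obtain w where w: "w \<in> gen_words S T" "X = U_class S mS T mT w" by (auto simp: U_carrier_def)
  obtain n where n: "ev mS mT w = Some n" using w ev_ne by (auto simp: gw)
  have "vld S T n" using ev_vld' n w by (auto simp: gw)
  then show "X \<in> psi ` V" using class_eq w n by auto
next
  fix X assume "X \<in> psi ` V"
  then obtain n where "vld S T n" "X = psi n" by auto
  then show "X \<in> U_carrier S mS T mT" unfolding U_carrier_def
    using class_canon canon_gw by (metis image_eqI)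
qed

lemma mult_hom: "vld S T x \<Longrightarrow> vld S T y \<Longrightarrow> U_mult S mS T mT (psi x) (psi y) = psi (mult x y)"
proof -
  assume x: "vld S T x" and y: "vld S T y"
  have "\<exists>u. u \<in> psi x" using x canon_gw ev_canon by (auto simp: psi_def)
  then have u: "(SOME u. u \<in> psi x) \<in> psi x" by (rule someI_ex)
  have "\<exists>u. u \<in> psi y" using y canon_gw ev_canon by (auto simp: psi_def)
  then have v: "(SOME u. u \<in> psi y) \<in> psi y" by (rule someI_ex)
  let ?u = "SOME u. u \<in> psi x" and ?v = "SOME u. u \<in> psi y"
  have "?u @ ?v \<in> gen_words S T" using u v by (auto simp: psi_def gw)
  moreover have "ev mS mT (?u @ ?v) = Some (mult x y)"
    using u v by (auto simp: psi_def gw ev_append)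
  ultimately show ?thesis unfolding U_mult_def using class_eq by simp
qed


lemma U_height: "R_height (U_carrier S mS T mT) (U_mult S mS T mT) = R_height V mult"
  using R_height_iso(2)[OF sgV psi_inj, of "U_mult S mS T mT"] mult_hom carrier_eq by simp

end

locale setting2 = setting +
  fixes A :: "'a set" and c :: 'b
  assumes li: "left_ideal S mS A" and rsT: "right_simple T mT"
    and noid: "has_no_idempotent T mT" and cT: "c \<in> T"
begin

lemma rs: assumes u: "u \<in> T" and t: "t \<in> T" shows "\<exists>w\<in>T. t = mT u w"
proof -
  let ?I = "{mT u w | w. w \<in> T}"
  have "right_ideal T mT ?I"
    unfolding right_ideal_def using u clT asT by blast
  then have "?I = T" using rsT by (simp add: right_simple_def)
  then show ?thesis using t by blast
qed

lemma noc: assumes t: "t \<in> T" and x: "x \<in> T" shows "mT t x \<noteq> x"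
proof
  assume h: "mT t x = x"
  obtain u where u: "u \<in> T" "t = mT x u" using rs[OF x t] by blast
  let ?e = "mT u x"
  have "mT ?e ?e = mT u (mT x (mT u x))" using u x asT clT by simp
  also have "\<dots> = mT u (mT (mT x u) x)" using u x asT by simp
  also have "\<dots> = ?e" using h u by simp
  finally show False using noid u x clT by (auto simp: has_no_idempotent_def)
qed

lemma AS: "A \<subseteq> S" using li by (simp add: left_ideal_def)
lemma clA: "a \<in> S \<Longrightarrow> b \<in> A \<Longrightarrow> mS a b \<in> A" using li by (simp add: left_ideal_def)

abbreviation N :: "('a, 'b) nf set" where "N \<equiv> NS ` S"

lemma sgN: "semigroup_on N mult" "R_height N mult = R_height S mS"
  using R_height_iso[OF sgS, of NS mult] by (auto simp: inj_on_def)

lemma nm_not_NS[simp]: "nm mS mT (NT t) w \<noteq> NS a" "nm mS mT (NTS t b) w \<noteq> NS a"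
  by (cases w; simp)+

lemma nm_not_NS'[simp]: "NS a \<noteq> nm mS mT (NT t) w" "NS a \<noteq> nm mS mT (NTS t b) w"
  by (cases w; simp)+

lemma not_le_NS: "p \<notin> N \<Longrightarrow> vld S T p \<Longrightarrow> R_le M mult (NS a) p \<Longrightarrow> False"
  by (cases p) (auto simp: R_le_def elim!: nm.elims)

lemma allP: assumes x: "x \<in> V - N" and y: "y \<in> V - N" shows "R_le V mult x y"
proof (cases y)
  case (NS b) then show ?thesis using y by auto
next
  case (NT u)
  show ?thesis
  proof (cases x)
    case (NS a) then show ?thesis using x by auto
  next
    case (NT t)
    have "t \<in> T" "u \<in> T" using x y NT \<open>y = NT u\<close> by auto
    then obtain w where "w \<in> T" "t = mT u w" using rs by blast
    then show ?thesis using NT \<open>y = NT u\<close> unfolding R_le_def by (intro disjI2 bexI[of _ "NT w"]) auto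
  next
    case (NTS t a)
    have "t \<in> T" "u \<in> T" using x y NTS \<open>y = NT u\<close> by auto
    then obtain w where "w \<in> T" "t = mT u w" using rs by blast
    then show ?thesis using NTS \<open>y = NT u\<close> x unfolding R_le_def by (intro disjI2 bexI[of _ "NTS w a"]) auto
  qed
next
  case (NTS u b)
  show ?thesis
  proof (cases x)
    case (NS a) then show ?thesis using x by auto
  next
    case (NT t)
    have "t \<in> T" "u \<in> T" using x y NT \<open>y = NTS u b\<close> by auto
    then obtain w where "w \<in> T" "t = mT u w" using rs by blast
    then show ?thesis using NT \<open>y = NTS u b\<close> unfolding R_le_def by (intro disjI2 bexI[of _ "NT w"]) auto
  next
    case (NTS t a)
    have "t \<in> T" "u \<in> T" using x y NTS \<open>y = NTS u b\<close> by auto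
    then obtain w where "w \<in> T" "t = mT u w" using rs by blast
    then show ?thesis using NTS \<open>y = NTS u b\<close> x unfolding R_le_def by (intro disjI2 bexI[of _ "NTS w a"]) auto
  qed
qed

lemma V_height: "R_height V mult = R_height S mS + 1"
proof -
  have "R_height V mult = pheight V (R_le V mult)" by (rule Rh_pheight[OF sgV])
  also have "\<dots> = pheight N (R_le V mult) + enat 1"
  proof (rule pheight_split[where Z="{NT c}"])
    show "N \<subseteq> V" by auto
  next
    fix p n assume p: "p \<in> V - N" and n: "n \<in> N"
    then obtain a where a: "n = NS a" "a \<in> S" by auto
    have "p = mult (NS a) p" using p by (cases p) auto
    then have "R_le V mult p n" using a p unfolding R_le_def by (intro disjI2 bexI[of _ p]) auto
    moreover have "\<not> R_le V mult n p" using not_le_NS p a by blast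
    ultimately show "R_le V mult p n \<and> \<not> R_le V mult n p" by blast
  next
    show "finite {NT c}" by simp
    show "pchain (V - N) (R_le V mult) {NT c}" using cT by (auto simp: pchain_def R_le_refl)
    show "card {NT c} = 1" by simp
  next
    fix E assume f: "finite E" and ch: "pchain (V - N) (R_le V mult) E"
    have EV: "E \<subseteq> V - N" and an: "\<forall>x\<in>E. \<forall>y\<in>E. R_le V mult x y \<and> R_le V mult y x \<longrightarrow> x = y"
      using ch unfolding pchain_def by blast+
    have "\<forall>a1\<in>E. \<forall>a2\<in>E. a1 = a2"
    proof (intro ballI)
      fix a1 a2 assume "a1 \<in> E" "a2 \<in> E"
      then show "a1 = a2" using an allP[of a1 a2] allP[of a2 a1] EV by blast
    qed
    then show "card E \<le> 1" using card_le_Suc0_iff_eq[OF f] by simp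
  qed
  also have "pheight N (R_le V mult) = R_height N mult"
  proof (rule R_height_sub[OF sgN(1)])
    fix x y assume xy: "x \<in> N" "y \<in> N"
    have key: "w \<in> N" if "vld S T w" "x = mult y w" for w
      using xy that by (cases w) auto
    have NV: "N \<subseteq> V" by auto
    show "R_le V mult x y \<longleftrightarrow> R_le N mult x y"
      unfolding R_le_def using key NV by blast
  qed
  finally show ?thesis using sgN(2) by (simp add: one_enat_def)
qed



definition Q :: "('a, 'b) nf set" where
  "Q = (\<lambda>t. NT (mT t c)) ` T \<union> {NTS t a | t a. t \<in> T \<and> a \<in> A}"

definition Bp :: "('a, 'b) nf set" where
  "Bp = NS ` A \<union> {NT c} \<union> Q"

abbreviation NA :: "('a, 'b) nf set" where "NA \<equiv> NS ` A"

lemma Bp_iff: "x \<in> Bp \<longleftrightarrow> (\<exists>a\<in>A. x = NS a) \<or> x = NT c \<or> (\<exists>t\<in>T. x = NT (mT t c)) \<or> (\<exists>t\<in>T. \<exists>a\<in>A. x = NTS t a)"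
  unfolding Bp_def Q_def by blast

lemma mNS: "a \<in> A \<Longrightarrow> NS a \<in> Bp" and mc: "NT c \<in> Bp"
  and mQ1: "t \<in> T \<Longrightarrow> NT (mT t c) \<in> Bp"
  and mQ3: "t \<in> T \<Longrightarrow> a \<in> A \<Longrightarrow> NTS t a \<in> Bp"
  unfolding Bp_iff by blast+

lemma mQ2: "t \<in> T \<Longrightarrow> u \<in> T \<Longrightarrow> NT (mT t (mT u c)) \<in> Bp"
  using mQ1[of "mT t u"] asT[of t u c] cT clT by simp

lemma BV: "Bp \<subseteq> V"
  using AS cT clT unfolding Bp_def Q_def by auto

lemma Bp_cases:
  assumes "x \<in> Bp"
  obtains (a) a where "a \<in> A" "x = NS a" | (c) "x = NT c" | (q) t where "t \<in> T" "x = NT (mT t c)"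
    | (s) t a where "t \<in> T" "a \<in> A" "x = NTS t a"
  using assms unfolding Bp_iff by blast

lemma clB: assumes x: "x \<in> Bp" and y: "y \<in> Bp" shows "mult x y \<in> Bp"
proof -
  have AS': "\<And>a. a \<in> A \<Longrightarrow> a \<in> S" using AS by blast
  note simps = mNS mc mQ1 mQ2 mQ3 clA AS' clT cT
  from x show ?thesis
  proof (cases rule: Bp_cases)
    case (a a) from y show ?thesis by (cases rule: Bp_cases) (simp_all add: a simps)
  next
    case c from y show ?thesis by (cases rule: Bp_cases) (simp_all add: c simps)
  next
    case (q t) from y show ?thesis by (cases rule: Bp_cases) (simp_all add: q simps)
  next
    case (s t a) from y show ?thesis by (cases rule: Bp_cases) (simp_all add: s simps)
  qed
qed

lemma sgB: "semigroup_on Bp mult"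
  unfolding semigroup_on_def using clB assoc BV by blast

lemma sgA: "semigroup_on A mS"
  unfolding semigroup_on_def using clA AS asS by blast

lemma sgNA: "semigroup_on NA mult" "R_height NA mult = R_height A mS"
  using R_height_iso[OF sgA, of NS mult] by (auto simp: inj_on_def)

lemma B_set_eq: "B_set S mS T mT A c = psi ` Bp"
proof -
  have e1: "U_class S mS T mT [Inl a] = psi (NS a)" if "a \<in> A" for a
    using class_canon[of "NS a"] AS that by auto
  have e2: "U_class S mS T mT [Inr c] = psi (NT c)"
    using class_canon[of "NT c"] cT by auto
  have e3: "U_class S mS T mT [Inr t, Inr c] = psi (NT (mT t c))" if "t \<in> T" for t
    using class_eq[of "[Inr t, Inr c]"] that cT by (auto simp: gw)
  have e4: "U_class S mS T mT [Inr t, Inl a] = psi (NTS t a)" if "t \<in> T" "a \<in> A" for t a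
    using class_canon[of "NTS t a"] AS that by auto
  show ?thesis
  proof (intro equalityI subsetI)
    fix X assume "X \<in> B_set S mS T mT A c"
    then consider (a) a where "a \<in> A" "X = U_class S mS T mT [Inl a]"
      | (b) "X = U_class S mS T mT [Inr c]"
      | (c) t a where "t \<in> T" "a \<in> A" "X = U_class S mS T mT [Inr t, Inl a]"
      | (d) t where "t \<in> T" "X = U_class S mS T mT [Inr t, Inr c]"
      unfolding B_set_def by blast
    then show "X \<in> psi ` Bp"
    proof cases
      case a then show ?thesis using e1 mNS by blast
    next
      case b then show ?thesis using e2 mc by blast
    next
      case c then show ?thesis using e4 mQ3 by blast
    next
      case d then show ?thesis using e3 mQ1 by blast
    qed
  next
    fix X assume "X \<in> psi ` Bp"
    then obtain x where x: "x \<in> Bp" "X = psi x" by blast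
    then show "X \<in> B_set S mS T mT A c"
      unfolding Bp_iff[of x] B_set_def
    proof (elim disjE bexE)
      fix a assume "a \<in> A" "x = NS a"
      then show "X \<in> {U_class S mS T mT [y] |y. y \<in> Inl ` A \<union> {Inr c}} \<union>
            {U_class S mS T mT [Inr t, y] |t y. t \<in> T \<and> y \<in> Inl ` A \<union> {Inr c}}"
        using e1 x by blast
    next
      assume "x = NT c"
      then show "X \<in> {U_class S mS T mT [y] |y. y \<in> Inl ` A \<union> {Inr c}} \<union>
            {U_class S mS T mT [Inr t, y] |t y. t \<in> T \<and> y \<in> Inl ` A \<union> {Inr c}}"
        using e2 x by blast
    next
      fix t assume "t \<in> T" "x = NT (mT t c)"
      then show "X \<in> {U_class S mS T mT [y] |y. y \<in> Inl ` A \<union> {Inr c}} \<union>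
            {U_class S mS T mT [Inr t, y] |t y. t \<in> T \<and> y \<in> Inl ` A \<union> {Inr c}}"
        using e3 x by blast
    next
      fix t a assume "t \<in> T" "a \<in> A" "x = NTS t a"
      then show "X \<in> {U_class S mS T mT [y] |y. y \<in> Inl ` A \<union> {Inr c}} \<union>
            {U_class S mS T mT [Inr t, y] |t y. t \<in> T \<and> y \<in> Inl ` A \<union> {Inr c}}"
        using e4 x by blast
    qed
  qed
qed


lemma Q_sub: "Q \<subseteq> Bp" unfolding Bp_def by blast

lemma Q_cases:
  assumes "x \<in> Q"
  obtains (q) t where "t \<in> T" "x = NT (mT t c)" | (s) t a where "t \<in> T" "a \<in> A" "x = NTS t a"
  using assms unfolding Q_def by blast

lemma allQ: assumes x: "x \<in> Q" and y: "y \<in> Q" shows "R_le Bp mult x y"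
proof -
  have AS': "\<And>a. a \<in> A \<Longrightarrow> a \<in> S" using AS by blast
  from y show ?thesis
  proof (cases rule: Q_cases)
    case (q u)
    have uc: "mT u c \<in> T" using q cT clT by simp
    from x show ?thesis
    proof (cases rule: Q_cases)
      case (q t)
      obtain w where w: "w \<in> T" "t = mT (mT u c) w" using rs[OF uc q(1)] by blast
      have "x = mult y (NT (mT w c))" using q \<open>y = NT (mT u c)\<close> w asT uc cT by simp
      then show ?thesis using mQ1[OF w(1)] unfolding R_le_def by blast
    next
      case (s t a)
      obtain w where w: "w \<in> T" "t = mT (mT u c) w" using rs[OF uc s(1)] by blast
      have "x = mult y (NTS w a)" using s \<open>y = NT (mT u c)\<close> w by simp
      then show ?thesis using mQ3[OF w(1) s(2)] unfolding R_le_def by blast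
    qed
  next
    case (s u b)
    note ys = s
    from x show ?thesis
    proof (cases rule: Q_cases)
      case (q t)
      obtain w where w: "w \<in> T" "t = mT u w" using rs[OF ys(1) q(1)] by blast
      have "x = mult y (NT (mT w c))" using q ys w asT cT by simp
      then show ?thesis using mQ1[OF w(1)] unfolding R_le_def by blast
    next
      case (s t a)
      obtain w where w: "w \<in> T" "t = mT u w" using rs[OF ys(1) s(1)] by blast
      have "x = mult y (NTS w a)" using s ys w by simp
      then show ?thesis using mQ3[OF w(1) s(2)] unfolding R_le_def by blast
    qed
  qed
qed

lemma Bp_minus: "Bp - NA \<subseteq> {NT c} \<union> Q"
  unfolding Bp_def by blast

lemma notNS_Bp: "p \<in> Bp - NA \<Longrightarrow> p \<notin> N"
  by (auto simp: Bp_iff)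

lemma c_not_le: "\<not> R_le Bp mult (NT c) (NT (mT c c))"
proof
  have cc: "mT c c \<in> T" using cT clT by simp
  assume "R_le Bp mult (NT c) (NT (mT c c))"
  then consider "c = mT c c" | w where "w \<in> Bp" "NT c = mult (NT (mT c c)) w"
    unfolding R_le_def by auto
  then show False
  proof cases
    case 1 then show False using noc[OF cT cT] by simp
  next
    case 2
    from 2(1) show False
    proof (cases rule: Bp_cases)
      case (a a) then show False using 2 by simp
    next
      case c
      have "NT c = mult (NT (mT c c)) (NT c)" using 2(2) c by simp
      then show False using noc[OF cc cT] by simp
    next
      case (q t)
      have e: "mT (mT c c) (mT t c) = mT (mT (mT c c) t) c" by (rule asT[OF cc q(1) cT, symmetric])
      have "c = mT (mT c c) (mT t c)" using 2(2) q(2) by simp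
      then have "mT (mT (mT c c) t) c = c" using e by simp
      moreover have "mT (mT c c) t \<in> T" using cc q(1) clT by blast
      ultimately show False using noc cT by blast
    next
      case (s t a) then show False using 2 by simp
    qed
  qed
qed

lemma Bp_height: "R_height Bp mult = R_height A mS + 2"
proof -
  have cc: "mT c c \<in> T" using cT clT by simp
  have ne: "NT c \<noteq> NT (mT c c)" using noc[OF cT cT] by simp
  have "R_height Bp mult = pheight Bp (R_le Bp mult)" by (rule Rh_pheight[OF sgB])
  also have "\<dots> = pheight NA (R_le Bp mult) + enat 2"
  proof (rule pheight_split[where Z="{NT c, NT (mT c c)}"])
    show "NA \<subseteq> Bp" using mNS by blast
  next
    fix p n assume p: "p \<in> Bp - NA" and n: "n \<in> NA"
    then obtain a where a: "n = NS a" "a \<in> A" by auto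
    have pV: "vld S T p" using p BV by auto
    have "p = mult (NS a) p" using p by (cases p) (auto simp: Bp_iff)
    then have "R_le Bp mult p n" using a p unfolding R_le_def by (intro disjI2 bexI[of _ p]) auto
    moreover have "\<not> R_le Bp mult n p" using not_le_NS[OF notNS_Bp[OF p] pV] a by blast
    ultimately show "R_le Bp mult p n \<and> \<not> R_le Bp mult n p" by blast
  next
    show "finite {NT c, NT (mT c c)}" by simp
    show "card {NT c, NT (mT c c)} = 2" using ne by simp
    have m1: "NT c \<in> Bp - NA" using mc by auto
    have m2: "NT (mT c c) \<in> Bp - NA" using mQ1[OF cT] by auto
    have l: "R_le Bp mult (NT (mT c c)) (NT c)" using mc unfolding R_le_def by (intro disjI2 bexI[of _ "NT c"]) auto
    show "pchain (Bp - NA) (R_le Bp mult) {NT c, NT (mT c c)}"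
      unfolding pchain_def using m1 m2 l c_not_le R_le_refl by auto
  next
    fix E assume f: "finite E" and ch: "pchain (Bp - NA) (R_le Bp mult) E"
    have EV: "E \<subseteq> Bp - NA" and an: "\<forall>x\<in>E. \<forall>y\<in>E. R_le Bp mult x y \<and> R_le Bp mult y x \<longrightarrow> x = y"
      using ch unfolding pchain_def by blast+
    have EQ: "E - {NT c} \<subseteq> Q" using EV Bp_minus by blast
    have "\<forall>a1\<in>E - {NT c}. \<forall>a2\<in>E - {NT c}. a1 = a2"
    proof (intro ballI)
      fix a1 a2 assume "a1 \<in> E - {NT c}" "a2 \<in> E - {NT c}"
      then show "a1 = a2" using an allQ[of a1 a2] allQ[of a2 a1] EQ by blast
    qed
    then have c1: "card (E - {NT c}) \<le> 1" using card_le_Suc0_iff_eq[of "E - {NT c}"] f by simp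
    have c2: "card (E \<inter> {NT c}) \<le> 1" using card_mono[of "{NT c}" "E \<inter> {NT c}"] by simp
    have "card E = card (E \<inter> {NT c}) + card (E - {NT c})" using f by (rule card_Int_Diff)
    then show "card E \<le> 2" using c1 c2 by simp
  qed
  also have "pheight NA (R_le Bp mult) = R_height NA mult"
  proof (rule R_height_sub[OF sgNA(1)])
    fix x y assume xy: "x \<in> NA" "y \<in> NA"
    have key: "w \<in> NA" if "w \<in> Bp" "x = mult y w" for w
      using xy that by (cases w) (auto simp: Bp_iff)
    have NB: "NA \<subseteq> Bp" using mNS by blast
    show "R_le Bp mult x y \<longleftrightarrow> R_le NA mult x y"
      unfolding R_le_def using key NB by blast
  qed
  finally show ?thesis using sgNA(2) by (simp add: numeral_eq_enat)
qed

lemma B_height: "R_height (B_set S mS T mT A c) (U_mult S mS T mT) = R_height A mS + 2"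
proof -
  have inj: "inj_on psi Bp" using psi_inj BV inj_on_subset by blast
  have "R_height (psi ` Bp) (U_mult S mS T mT) = R_height Bp mult"
    using R_height_iso(2)[OF sgB inj, of "U_mult S mS T mT"] mult_hom BV by auto
  then show ?thesis using B_set_eq Bp_height by simp
qed

lemma U_height': "R_height (U_carrier S mS T mT) (U_mult S mS T mT) = R_height S mS + 1"
  using U_height V_height by simp

end


theorem theorem4p8:
  fixes S :: "'a set" and mS :: "'a \<Rightarrow> 'a \<Rightarrow> 'a"
    and T :: "'b set" and mT :: "'b \<Rightarrow> 'b \<Rightarrow> 'b"
    and A :: "'a set" and c :: 'b
  assumes "semigroup_on S mS"
    and "R_height S mS \<noteq> \<infinity>"
    and "left_ideal S mS A"
    and "semigroup_on T mT"
    and "right_simple T mT"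
    and "has_no_idempotent T mT"
    and "c \<in> T"
  shows "R_height (U_carrier S mS T mT) (U_mult S mS T mT) = R_height S mS + 1 \<and>
         R_height (B_set S mS T mT A c) (U_mult S mS T mT) = R_height A mS + 2"
proof -
  interpret setting2 S mS T mT A c
    using assms by (simp add: setting_def setting2_def setting2_axioms_def)
  show ?thesis using U_height' B_height by simp
qed

end
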